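(* A digraph $X$ has every eigenvalue of $H(X)$ in $\{-1,1\}$ if and only if $\Gamma(X)\cong mK_2$ (the disjoint union of $m$ copies of $K_2$) for some $m$.
   Context: A digraph $X$ has a finite vertex set and an arc set of ordered pairs of distinct vertices. The underlying graph $\Gamma(X)$ is the simple graph with an edge $\{x,y\}$ whenever $xy$ or $yx$ is an arc. The Hermitian adjacency matrix $H(X)$ has $(u,v)$-entry $1$ if $uv$ and $vu$ are arcs, $i$ if only $uv$ is an arc, $-i$ if only $vu$ is an arc, and $0$ otherwise. *)

theory Defs
  imports Complex_Main "Jordan_Normal_Form.Char_Poly"
begin

definition digraph :: "nat \<Rightarrow> (nat \<times> nat) set \<Rightarrow> bool" where
  "digraph n A \<longleftrightarrow> A \<subseteq> {0..<n} \<times> {0..<n} \<and> (\<forall>(u,v)\<in>A. u \<noteq> v)"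

definition herm_adj :: "nat \<Rightarrow> (nat \<times> nat) set \<Rightarrow> complex mat" where
  "herm_adj n A = mat n n (\<lambda>(u,v).
     if (u,v) \<in> A \<and> (v,u) \<in> A then 1
     else if (u,v) \<in> A then \<i>
     else if (v,u) \<in> A then - \<i>
     else 0)"

definition underlying_adj :: "(nat \<times> nat) set \<Rightarrow> nat \<Rightarrow> nat \<Rightarrow> bool" where
  "underlying_adj A u v \<longleftrightarrow> (u,v) \<in> A \<or> (v,u) \<in> A"

definition mK2_adj :: "nat \<Rightarrow> nat \<Rightarrow> nat \<Rightarrow> bool" where
  "mK2_adj m i j \<longleftrightarrow> i < 2*m \<and> j < 2*m \<and> i \<noteq> j \<and> i div 2 = j div 2"

definition underlying_iso_mK2 :: "nat \<Rightarrow> (nat \<times> nat) set \<Rightarrow> nat \<Rightarrow> bool" where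
  "underlying_iso_mK2 n A m \<longleftrightarrow>
     (\<exists>f. bij_betw f {0..<n} {0..<2*m} \<and>
          (\<forall>u\<in>{0..<n}. \<forall>v\<in>{0..<n}. underlying_adj A u v \<longleftrightarrow> mK2_adj m (f u) (f v)))"

end

theory Submission
  imports Defs "Jordan_Normal_Form.Schur_Decomposition"
begin


definition mtr :: "complex mat \<Rightarrow> complex" where
  "mtr M = (\<Sum>i<dim_row M. M $$ (i,i))"

lemma mtr_comm:
  assumes X: "X \<in> carrier_mat n n" and Y: "Y \<in> carrier_mat n n"
  shows "mtr (X * Y) = mtr (Y * X)"
proof -
  have "mtr (X * Y) = (\<Sum>i<n. \<Sum>k<n. X $$ (i,k) * Y $$ (k,i))"
    using X Y by (simp add: mtr_def scalar_prod_def lessThan_atLeast0)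
  also have "\<dots> = (\<Sum>k<n. \<Sum>i<n. Y $$ (k,i) * X $$ (i,k))"
    by (subst sum.swap) (simp add: mult.commute)
  also have "\<dots> = mtr (Y * X)"
    using X Y by (simp add: mtr_def scalar_prod_def lessThan_atLeast0)
  finally show ?thesis .
qed

lemma mtr_sim:
  assumes X: "X \<in> carrier_mat n n" and P: "P \<in> carrier_mat n n" and Q: "Q \<in> carrier_mat n n"
    and QP: "Q * P = 1\<^sub>m n"
  shows "mtr (P * X * Q) = mtr X"
proof -
  have "mtr (P * X * Q) = mtr (Q * (P * X))"
    by (rule mtr_comm[of _ n], insert X P Q, auto)
  also have "Q * (P * X) = (Q * P) * X" using X P Q by (simp add: assoc_mult_mat[of _ n n _ n _ n])
  also have "\<dots> = X" using QP X by simp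
  finally show ?thesis .
qed

lemma ut_pow:
  fixes B :: "complex mat"
  assumes B: "B \<in> carrier_mat n n" and ut: "upper_triangular B"
  shows "upper_triangular (B ^\<^sub>m k) \<and> (\<forall>i<n. (B ^\<^sub>m k) $$ (i,i) = B $$ (i,i) ^ k)"
proof (induction k)
  case 0
  then show ?case using B by auto
next
  case (Suc k)
  let ?X = "B ^\<^sub>m k"
  have X: "?X \<in> carrier_mat n n" using B by simp
  have utX: "upper_triangular ?X" and dX: "\<forall>i<n. ?X $$ (i,i) = B $$ (i,i) ^ k" using Suc by auto
  have e: "(?X * B) $$ (i,j) = (\<Sum>l<n. ?X $$ (i,l) * B $$ (l,j))" if "i < n" "j < n" for i j
    using that X B by (simp add: scalar_prod_def lessThan_atLeast0)
  have "upper_triangular (?X * B)"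
  proof
    fix i j assume ji: "j < i" and i: "i < dim_row (?X * B)"
    hence i': "i < n" using X B by simp
    have "(\<Sum>l<n. ?X $$ (i,l) * B $$ (l,j)) = 0"
    proof (rule sum.neutral, intro ballI)
      fix l assume l: "l \<in> {..<n}"
      show "?X $$ (i,l) * B $$ (l,j) = 0"
      proof (cases "l < i")
        case True then show ?thesis using upper_triangularD[OF utX True] i' B by simp
      next
        case False then have "j < l" using ji by auto
        then show ?thesis using upper_triangularD[OF ut \<open>j < l\<close>] l B by simp
      qed
    qed
    then show "(?X * B) $$ (i,j) = 0" using e[of i j] i' ji by auto
  qed
  moreover have "(?X * B) $$ (i,i) = B $$ (i,i) ^ Suc k" if i: "i < n" for i
  proof -
    have z: "(\<Sum>l\<in>{..<n}-{i}. ?X $$ (i,l) * B $$ (l,i)) = 0"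
    proof (rule sum.neutral, intro ballI)
      fix l assume l: "l \<in> {..<n}-{i}"
      show "?X $$ (i,l) * B $$ (l,i) = 0"
      proof (cases "l < i")
        case True then show ?thesis using upper_triangularD[OF utX True] i B by simp
      next
        case False then have "i < l" using l by auto
        then show ?thesis using upper_triangularD[OF ut \<open>i < l\<close>] l B by simp
      qed
    qed
    have "(\<Sum>l<n. ?X $$ (i,l) * B $$ (l,i)) = ?X $$ (i,i) * B $$ (i,i) + (\<Sum>l\<in>{..<n}-{i}. ?X $$ (i,l) * B $$ (l,i))"
      by (rule sum.remove) (use i in auto)
    then have "(\<Sum>l<n. ?X $$ (i,l) * B $$ (l,i)) = ?X $$ (i,i) * B $$ (i,i)" using z by simp
    then show ?thesis using e[of i i] i dX by (simp add: power_Suc2)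
  qed
  ultimately show ?case by simp
qed

lemma spec_trace:
  fixes H :: "complex mat"
  assumes H: "H \<in> carrier_mat n n"
    and ev: "\<forall>e. eigenvalue H e \<longrightarrow> e \<in> {-1, 1}"
    and k: "even k"
  shows "mtr (H ^\<^sub>m k) = of_nat n"
proof -
  obtain es where cp: "char_poly H = (\<Prod>a\<leftarrow>es. [:- a, 1:])" and len: "length es = n"
    using char_poly_factorized[OF H] by auto
  have ese: "e \<in> {-1,1}" if "e \<in> set es" for e
  proof -
    have "poly (char_poly H) e = 0" unfolding cp using that
      by (simp add: poly_prod_list prod_list_zero_iff)
    then show ?thesis using ev eigenvalue_root_char_poly[OF H] by blast
  qed
  obtain B P Q where sd: "schur_decomposition H es = (B,P,Q)"
    by (cases "schur_decomposition H es") auto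
  from schur_decomposition[OF H cp sd] have wit: "similar_mat_wit H B P Q"
    and ut: "upper_triangular B" and dg: "diag_mat B = es" by auto
  from similar_mat_witD2[OF H wit] have B: "B \<in> carrier_mat n n" and P: "P \<in> carrier_mat n n"
    and Q: "Q \<in> carrier_mat n n" and QP: "Q * P = 1\<^sub>m n" by auto
  have "H ^\<^sub>m k = P * B ^\<^sub>m k * Q" by (rule similar_mat_wit_pow_id[OF wit])
  hence "mtr (H ^\<^sub>m k) = mtr (B ^\<^sub>m k)" using mtr_sim[OF _ P Q QP, of "B ^\<^sub>m k"] B by simp
  also have "\<dots> = (\<Sum>i<n. B $$ (i,i) ^ k)" using ut_pow[OF B ut, of k] B by (simp add: mtr_def)
  also have "\<dots> = (\<Sum>i<n. 1)"
  proof (rule sum.cong[OF refl])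
    fix i assume i: "i \<in> {..<n}"
    have "B $$ (i,i) = es ! i" using dg[symmetric] i B by (simp add: diag_mat_def)
    hence "B $$ (i,i) \<in> {-1,1}" using ese[of "es ! i"] i len by auto
    then show "B $$ (i,i) ^ k = 1" using k by auto
  qed
  finally show ?thesis by simp
qed



lemma pair_iso:
  fixes adj :: "nat \<Rightarrow> nat \<Rightarrow> bool"
  assumes sym: "\<And>u v. adj u v \<Longrightarrow> adj v u"
    and irr: "\<And>u. \<not> adj u u"
    and uq: "\<And>u. u < n \<Longrightarrow> \<exists>!v. v < n \<and> adj u v"
  shows "\<exists>m f. bij_betw f {0..<n} {0..<2*m} \<and>
          (\<forall>u\<in>{0..<n}. \<forall>v\<in>{0..<n}. adj u v \<longleftrightarrow> mK2_adj m (f u) (f v))"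
proof -
  define p where "p u = (THE v. v < n \<and> adj u v)" for u
  have p: "p u < n \<and> adj u (p u)" if "u < n" for u
    unfolding p_def by (rule theI', rule uq[OF that])
  have padj: "adj u v \<longleftrightarrow> v = p u" if "u < n" "v < n" for u v
    using uq[OF that(1)] p[OF that(1)] that by blast
  have pp: "p (p u) = u" if "u < n" for u
  proof -
    have a: "adj (p u) u" using p[OF that] sym by blast
    then show ?thesis using padj[of "p u" u] p[OF that] that by simp
  qed
  have pne: "p u \<noteq> u" if "u < n" for u using p[OF that] irr by metis
  define S where "S = {u\<in>{0..<n}. u < p u}"
  have finS: "finite S" unfolding S_def by auto
  define m where "m = card S"
  obtain g where g: "bij_betw g S {0..<m}" using ex_bij_betw_finite_nat[OF finS] m_def by blast
  have pS: "p u \<in> S" if "u < n" "u \<notin> S" for u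
    using that p[OF that(1)] pne[OF that(1)] pp[OF that(1)] unfolding S_def by auto
  have pS2: "p u \<notin> S" if "u \<in> S" for u
    using that p pp unfolding S_def by (metis (mono_tags, lifting) atLeastLessThan_iff mem_Collect_eq not_less_iff_gr_or_eq)
  define c where "c u = (if u \<in> S then u else p u)" for u
  have cS: "c u \<in> S" if "u < n" for u using pS[OF that] unfolding c_def by auto
  define f where "f u = (if u \<in> S then 2 * g u else 2 * g (p u) + 1)" for u
  have fdiv: "f u div 2 = g (c u)" for u unfolding f_def c_def by auto
  have gS: "g s < m" if "s \<in> S" for s using g that unfolding bij_betw_def by auto
  have ginj: "s = t" if "s \<in> S" "t \<in> S" "g s = g t" for s t
    using g that unfolding bij_betw_def inj_on_def by auto
  have Sn: "s < n" if "s \<in> S" for s using that unfolding S_def by auto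
  have finj: "inj_on f {0..<n}"
  proof (rule inj_onI)
    fix u v assume u: "u \<in> {0..<n}" and v: "v \<in> {0..<n}" and e: "f u = f v"
    show "u = v"
    proof (cases "u \<in> S")
      case True
      show ?thesis
      proof (cases "v \<in> S")
        case True then show ?thesis using \<open>u \<in> S\<close> e ginj unfolding f_def by auto
      next
        case False then show ?thesis using \<open>u \<in> S\<close> e unfolding f_def by presburger
      qed
    next
      case False
      show ?thesis
      proof (cases "v \<in> S")
        case True then show ?thesis using \<open>u \<notin> S\<close> e unfolding f_def by presburger
      next
        case F2: False
        have "g (p u) = g (p v)" using e False F2 unfolding f_def by auto
        hence "p u = p v" using ginj pS u v False F2 by auto
        then show ?thesis using pp u v by (metis atLeastLessThan_iff)
      qed
    qed
  qed
  have fimg: "f ` {0..<n} = {0..<2*m}"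
  proof
    show "f ` {0..<n} \<subseteq> {0..<2*m}"
    proof
      fix k assume "k \<in> f ` {0..<n}"
      then obtain u where u: "u < n" and k: "k = f u" by auto
      have "g (c u) < m" using gS cS u by auto
      moreover have "f u div 2 = g (c u)" by (rule fdiv)
      ultimately show "k \<in> {0..<2*m}" using k by auto
    qed
  next
    show "{0..<2*m} \<subseteq> f ` {0..<n}"
    proof
      fix k assume k: "k \<in> {0..<2*m}"
      have "k div 2 \<in> {0..<m}" using k by auto
      then obtain s where s: "s \<in> S" and gs: "g s = k div 2" using g unfolding bij_betw_def by (metis imageE)
      show "k \<in> f ` {0..<n}"
      proof (cases "even k")
        case True
        have "f s = k" using s gs True unfolding f_def by auto
        then show ?thesis using Sn[OF s] by force
      next
        case False
        have "p s \<notin> S" using pS2 s by auto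
        moreover have "p (p s) = s" using pp Sn s by auto
        ultimately have "f (p s) = k" using gs False unfolding f_def by auto
        then show ?thesis using p Sn[OF s] by force
      qed
    qed
  qed
  have adjf: "adj u v \<longleftrightarrow> mK2_adj m (f u) (f v)" if u: "u < n" and v: "v < n" for u v
  proof -
    have fu: "f u < 2*m" and fv: "f v < 2*m" using fimg u v by auto
    have "mK2_adj m (f u) (f v) \<longleftrightarrow> u \<noteq> v \<and> c u = c v"
    proof -
      have "f u \<noteq> f v \<longleftrightarrow> u \<noteq> v" using finj u v unfolding inj_on_def by auto
      moreover have "f u div 2 = f v div 2 \<longleftrightarrow> c u = c v"
        using fdiv ginj cS u v by metis
      ultimately show ?thesis unfolding mK2_adj_def using fu fv by auto
    qed
    also have "\<dots> \<longleftrightarrow> v = p u"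
    proof
      assume a: "u \<noteq> v \<and> c u = c v"
      show "v = p u"
      proof (cases "u \<in> S")
        case True
        then show ?thesis using a pp v unfolding c_def by (cases "v \<in> S") auto
      next
        case uS: False
        show ?thesis
        proof (cases "v \<in> S")
          case True then show ?thesis using a uS pp u v unfolding c_def by auto
        next
          case False
          then have "p u = p v" using a uS unfolding c_def by auto
          hence "u = v" using pp u v by metis
          with a show ?thesis by auto
        qed
      qed
    next
      assume vp: "v = p u"
      show "u \<noteq> v \<and> c u = c v"
      proof (cases "u \<in> S")
        case True
        then show ?thesis using vp pS2[OF True] pp[OF u] pne[OF u] unfolding c_def by auto
      next
        case False
        then show ?thesis using vp pS[OF u False] pp[OF u] pne[OF u] unfolding c_def by auto
      qed
    qed
    finally show ?thesis using padj u v by auto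
  qed
  show ?thesis using finj fimg adjf unfolding bij_betw_def by auto
qed

lemma div2_eq: fixes a b c :: nat
  assumes "a div 2 = b div 2" "a \<noteq> b" "c div 2 = b div 2" "c \<noteq> b" shows "a = c"
proof -
  have "a = 2*(a div 2) + a mod 2" "b = 2*(b div 2) + b mod 2" "c = 2*(c div 2) + c mod 2" by auto
  moreover have "a mod 2 < 2" "b mod 2 < 2" "c mod 2 < 2" by auto
  ultimately show ?thesis using assms by linarith
qed

lemma iso_uq:
  assumes "underlying_iso_mK2 n A m" "u < n"
  shows "\<exists>!v. v < n \<and> underlying_adj A u v"
proof -
  obtain f where bij: "bij_betw f {0..<n} {0..<2*m}"
    and ad: "\<forall>u\<in>{0..<n}. \<forall>v\<in>{0..<n}. underlying_adj A u v \<longleftrightarrow> mK2_adj m (f u) (f v)"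
    using assms(1) unfolding underlying_iso_mK2_def by blast
  have fu: "f u < 2*m" using bij assms(2) unfolding bij_betw_def by auto
  define j where "j = (if even (f u) then f u + 1 else f u - 1)"
  have j: "j < 2*m" "j \<noteq> f u" "j div 2 = f u div 2" using fu unfolding j_def by (auto elim: oddE)
  then obtain v where v: "v < n" "f v = j" using bij unfolding bij_betw_def
    by (metis atLeastLessThan_iff imageE zero_le)
  have "underlying_adj A u v" using ad v j fu assms(2) unfolding mK2_adj_def by auto
  moreover have "w = v" if "w < n" "underlying_adj A u w" for w
  proof -
    have "mK2_adj m (f u) (f w)" using ad that assms(2) by auto
    hence "f w div 2 = f u div 2" "f w \<noteq> f u" unfolding mK2_adj_def by auto
    hence "f w = j" using j div2_eq by metis
    thus ?thesis using v that bij unfolding bij_betw_def inj_on_def by auto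
  qed
  ultimately show ?thesis using v by blast
qed



definition hh :: "(nat \<times> nat) set \<Rightarrow> nat \<Rightarrow> nat \<Rightarrow> complex" where
  "hh A u v = (if (u,v) \<in> A \<and> (v,u) \<in> A then 1
     else if (u,v) \<in> A then \<i>
     else if (v,u) \<in> A then - \<i>
     else 0)"

lemma H_carrier: "herm_adj n A \<in> carrier_mat n n"
  unfolding herm_adj_def by simp

lemma H_idx: "u < n \<Longrightarrow> v < n \<Longrightarrow> herm_adj n A $$ (u,v) = hh A u v"
  unfolding herm_adj_def hh_def by simp

lemma hh_cnj: "hh A v u = cnj (hh A u v)"
  unfolding hh_def by auto

lemma hh_prod: "hh A u v * hh A v u = (if underlying_adj A u v then 1 else 0)"
  unfolding hh_def underlying_adj_def by auto

lemma hh_zero: "\<not> underlying_adj A u v \<Longrightarrow> hh A u v = 0"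
  unfolding hh_def underlying_adj_def by auto

lemma M_idx:
  assumes "u < n" "w < n"
  shows "(herm_adj n A * herm_adj n A) $$ (u,w) = (\<Sum>v<n. hh A u v * hh A v w)"
  using assms H_carrier[of n A]
  by (simp add: scalar_prod_def lessThan_atLeast0 H_idx)

lemma M_diag:
  assumes "u < n"
  shows "(herm_adj n A * herm_adj n A) $$ (u,u) = of_nat (card {v. v < n \<and> underlying_adj A u v})"
proof -
  have "(\<Sum>v<n. hh A u v * hh A v u) = (\<Sum>v<n. if underlying_adj A u v then 1 else 0)"
    by (simp add: hh_prod)
  also have "\<dots> = of_nat (card ({..<n} \<inter> Collect (underlying_adj A u)))"
    by (simp add: sum.If_cases)
  also have "{..<n} \<inter> Collect (underlying_adj A u) = {v. v < n \<and> underlying_adj A u v}" by auto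
  finally show ?thesis using M_idx[OF assms assms] by simp
qed

lemma M_herm:
  assumes "u < n" "w < n"
  shows "(herm_adj n A * herm_adj n A) $$ (w,u) = cnj ((herm_adj n A * herm_adj n A) $$ (u,w))"
proof -
  have "(\<Sum>v<n. hh A w v * hh A v u) = (\<Sum>v<n. cnj (hh A u v * hh A v w))"
  proof (rule sum.cong[OF refl])
    fix v
    have "hh A w v = cnj (hh A v w)" "hh A v u = cnj (hh A u v)" by (rule hh_cnj)+
    then show "hh A w v * hh A v u = cnj (hh A u v * hh A v w)" by (simp add: mult.commute)
  qed
  then show ?thesis using assms by (simp add: M_idx)
qed

lemma mtr_sq_herm:
  fixes X :: "complex mat"
  assumes X: "X \<in> carrier_mat n n" and h: "\<And>u w. u < n \<Longrightarrow> w < n \<Longrightarrow> X $$ (w,u) = cnj (X $$ (u,w))"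
  shows "mtr (X * X) = of_real (\<Sum>u<n. \<Sum>w<n. (cmod (X $$ (u,w)))^2)"
proof -
  have "mtr (X * X) = (\<Sum>u<n. \<Sum>w<n. X $$ (u,w) * X $$ (w,u))"
    using X by (simp add: mtr_def scalar_prod_def lessThan_atLeast0)
  also have "\<dots> = (\<Sum>u<n. \<Sum>w<n. of_real ((cmod (X $$ (u,w)))^2))"
  proof (intro sum.cong refl)
    fix u w assume u: "u \<in> {..<n}" and w: "w \<in> {..<n}"
    have e: "X $$ (w,u) = cnj (X $$ (u,w))" using u w by (intro h) auto
    have "X $$ (u,w) * X $$ (w,u) = X $$ (u,w) * cnj (X $$ (u,w))" using e by simp
    also have "\<dots> = of_real ((cmod (X $$ (u,w)))^2)" by (simp add: complex_norm_square[symmetric])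
    finally show "X $$ (u,w) * X $$ (w,u) = of_real ((cmod (X $$ (u,w)))^2)" .
  qed
  finally show ?thesis by simp
qed

lemma forward:
  assumes dg: "digraph n A"
    and ev: "\<forall>e::complex. eigenvalue (herm_adj n A) e \<longrightarrow> e \<in> {-1, 1}"
  shows "\<exists>m. underlying_iso_mK2 n A m"
proof -
  define H where "H = herm_adj n A"
  have H: "H \<in> carrier_mat n n" unfolding H_def by (rule H_carrier)
  define M where "M = H * H"
  have Mc: "M \<in> carrier_mat n n" unfolding M_def using H by simp
  define d where "d u = card {v. v < n \<and> underlying_adj A u v}" for u
  have H2: "H ^\<^sub>m 2 = M" unfolding M_def using H by (simp add: numeral_2_eq_2)
  have H4: "H ^\<^sub>m 4 = M * M"
  proof -
    have "H ^\<^sub>m 4 = H * H * H * H" using H by (simp add: numeral_eq_Suc)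
    also have "\<dots> = M * (H * H)" unfolding M_def using H
      by (simp add: assoc_mult_mat[of _ n n _ n _ n])
    finally show ?thesis unfolding M_def .
  qed
  have t2: "mtr M = of_nat n" using spec_trace[OF H ev[folded H_def], of 2] H2 by simp
  have t4: "mtr (M * M) = of_nat n" using spec_trace[OF H ev[folded H_def], of 4] H4 by simp
  have Md: "M $$ (u,u) = of_nat (d u)" if "u < n" for u
    unfolding M_def H_def d_def using M_diag[OF that] .
  have "mtr M = (\<Sum>u<n. of_nat (d u))" using Mc Md by (simp add: mtr_def)
  hence sd: "(\<Sum>u<n. d u) = n" using t2 by (metis of_nat_eq_iff of_nat_sum)
  define r where "r = (\<Sum>u<n. \<Sum>w<n. (cmod (M $$ (u,w)))^2)"
  have "mtr (M * M) = of_real r" unfolding r_def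
    by (rule mtr_sq_herm[OF Mc]) (unfold M_def H_def, rule M_herm)
  hence rn: "r = real n" using t4 by (metis of_real_eq_iff of_real_of_nat_eq)
  have "(\<Sum>u<n. real (d u ^ 2)) \<le> r" unfolding r_def
  proof (rule sum_mono)
    fix u assume u: "u \<in> {..<n}"
    have "real (d u ^ 2) = (cmod (M $$ (u,u)))^2" using Md u by simp
    also have "\<dots> \<le> (\<Sum>w<n. (cmod (M $$ (u,w)))^2)"
      by (rule member_le_sum[where f="\<lambda>w. (cmod (M $$ (u,w)))^2"]) (use u in auto)
    finally show "real (d u ^ 2) \<le> (\<Sum>w<n. (cmod (M $$ (u,w)))^2)" .
  qed
  hence "real (\<Sum>u<n. d u ^ 2) \<le> real n" using rn by simp
  hence sq: "(\<Sum>u<n. d u ^ 2) \<le> (\<Sum>u<n. d u)" using sd by linarith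
  have le1: "d u \<le> 1" if u: "u < n" for u
  proof (rule ccontr)
    assume "\<not> d u \<le> 1"
    hence "d u < d u ^ 2" by (simp add: power2_eq_square)
    moreover have "\<forall>x\<in>{..<n}. d x \<le> d x ^ 2" by (simp add: power2_eq_square)
    ultimately have "(\<Sum>u<n. d u) < (\<Sum>u<n. d u ^ 2)"
      using sum_strict_mono_ex1[of "{..<n}" d "\<lambda>x. d x ^ 2"] u by auto
    with sq show False by simp
  qed
  have eq1: "d u = 1" if u: "u < n" for u
  proof (rule ccontr)
    assume "d u \<noteq> 1"
    hence "d u < 1" using le1[OF u] by simp
    hence "(\<Sum>u<n. d u) < (\<Sum>u<n. 1)"
      using sum_strict_mono_ex1[of "{..<n}" d "\<lambda>x. 1"] u le1 by auto
    with sd show False by simp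
  qed
  have uq: "\<exists>!v. v < n \<and> underlying_adj A u v" if u: "u < n" for u
  proof -
    have "card {v. v < n \<and> underlying_adj A u v} = 1" using eq1[OF u] unfolding d_def .
    then obtain x where "{v. v < n \<and> underlying_adj A u v} = {x}" by (metis card_1_singletonE)
    then show ?thesis by (metis (mono_tags, lifting) mem_Collect_eq singletonD singletonI)
  qed
  have sym: "underlying_adj A u v \<Longrightarrow> underlying_adj A v u" for u v
    unfolding underlying_adj_def by auto
  have irr: "\<not> underlying_adj A u u" for u
    using dg unfolding digraph_def underlying_adj_def by auto
  from pair_iso[of "underlying_adj A" n, OF sym irr uq]
  show ?thesis unfolding underlying_iso_mK2_def by blast
qed

lemma backward:
  assumes iso: "underlying_iso_mK2 n A m"
  shows "\<forall>e::complex. eigenvalue (herm_adj n A) e \<longrightarrow> e \<in> {-1, 1}"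
proof (intro allI impI)
  fix e :: complex assume "eigenvalue (herm_adj n A) e"
  then obtain x where ex: "eigenvector (herm_adj n A) x e" unfolding eigenvalue_def by auto
  define H where "H = herm_adj n A"
  have H: "H \<in> carrier_mat n n" unfolding H_def by (rule H_carrier)
  have uq: "\<And>u. u < n \<Longrightarrow> \<exists>!v. v < n \<and> underlying_adj A u v" using iso_uq[OF iso] by blast
  have sym: "underlying_adj A u v \<Longrightarrow> underlying_adj A v u" for u v
    unfolding underlying_adj_def by auto
  have HH: "H * H = 1\<^sub>m n"
  proof (rule eq_matI)
    show "dim_row (H * H) = dim_row (1\<^sub>m n)" "dim_col (H * H) = dim_col (1\<^sub>m n)" using H by auto
    fix u w assume u: "u < dim_row (1\<^sub>m n)" and w: "w < dim_col (1\<^sub>m n)"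
    hence u: "u < n" and w: "w < n" by auto
    show "(H * H) $$ (u,w) = 1\<^sub>m n $$ (u,w)"
    proof (cases "u = w")
      case True
      obtain x where x1: "x < n \<and> underlying_adj A u x" and x2: "\<And>y. y < n \<and> underlying_adj A u y \<Longrightarrow> y = x"
        using uq[OF u] by (elim ex1E) blast
      have "{v. v < n \<and> underlying_adj A u v} = {x}" using x1 x2 by blast
      hence "card {v. v < n \<and> underlying_adj A u v} = 1" by simp
      then show ?thesis using M_diag[OF u, of A] True u unfolding H_def by simp
    next
      case False
      have "(\<Sum>v<n. hh A u v * hh A v w) = 0"
      proof (rule sum.neutral, intro ballI)
        fix v assume v: "v \<in> {..<n}"
        show "hh A u v * hh A v w = 0"
        proof (cases "underlying_adj A u v")
          case a1: True
          show ?thesis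
          proof (cases "underlying_adj A v w")
            case True
            have "underlying_adj A v u" using sym[OF a1] .
            obtain y where y2: "\<And>z. z < n \<and> underlying_adj A v z \<Longrightarrow> z = y"
              using uq[of v] v by (auto elim: ex1E)
            have "w = u" using y2[of w] y2[of u] u w True \<open>underlying_adj A v u\<close> by simp
            then show ?thesis using False by simp
          next
            case False then show ?thesis by (simp add: hh_zero)
          qed
        next
          case False then show ?thesis by (simp add: hh_zero)
        qed
      qed
      then show ?thesis using M_idx[OF u w, of A] False u w unfolding H_def by simp
    qed
  qed
  have "H ^\<^sub>m 2 *\<^sub>v x = e ^ 2 \<cdot>\<^sub>v x" using eigenvector_pow[OF H ex[folded H_def]] .
  moreover have "H ^\<^sub>m 2 = 1\<^sub>m n" using H HH by (simp add: numeral_2_eq_2)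
  moreover have x: "x \<in> carrier_vec n" "x \<noteq> 0\<^sub>v n" using ex H unfolding eigenvector_def H_def by auto
  ultimately have xe: "x = e ^ 2 \<cdot>\<^sub>v x" by simp
  obtain i where i: "i < n" "x $ i \<noteq> 0" using x by (metis eq_vecI index_zero_vec(1,2) carrier_vecD)
  have "x $ i = e ^ 2 * x $ i" using arg_cong[OF xe, of "\<lambda>y. y $ i"] i x by simp
  hence "e ^ 2 = 1" using i by simp
  thus "e \<in> {-1, 1}" by (auto simp: power2_eq_1_iff)
qed

theorem theorem9p1:
  fixes n :: nat and A :: "(nat \<times> nat) set"
  assumes "digraph n A"
  shows "(\<forall>ev::complex. eigenvalue (herm_adj n A) ev \<longrightarrow> ev \<in> {-1, 1})
         \<longleftrightarrow> (\<exists>m. underlying_iso_mK2 n A m)"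
  using forward[OF assms] backward by blast

end
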